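(* Let $q$ be a prime power, $e\ge2$, $r_1,\dots,r_{e-1},m>1$ integers, $n=r_{e-1}\cdots r_1m$, and $k$ an integer with $1<k\le m$. Put $N_1=m$ and $N_i=r_{i-1}\cdots r_1m$ for $2\le i\le e$ (so $N_e=n$). Let $\mathcal{C}_1\subseteq\mathcal{G}_q(m,k)$ be a union of finitely many pairwise distinct orbits under $\mathbb{F}_{q^m}^*$. For each $i=2,\dots,e$ let $\Phi_{i,1},\dots,\Phi_{i,s_i}:\mathbb{F}_{q^{N_{i-1}}}\to\mathbb{F}_{q^{N_i}}$ be injective $\mathbb{F}_q$-linear maps such that the subspaces $V_{i,h}=\Phi_{i,h}(\mathbb{F}_{q^{N_{i-1}}})$ have pairwise distinct orbits under $\mathbb{F}_{q^{N_i}}^*$, and let $\mathcal{C}_i=\bigcup_{h=1}^{s_i}\mathrm{Orb}_{\mathbb{F}_{q^{N_i}}^*}(V_{i,h})\subseteq\mathcal{G}_q(N_i,N_{i-1})$ be full-length. Define recursively $\mathcal{D}_1=\mathcal{C}_1$ and, for $2\le i\le e$, $$\mathcal{D}_i=\mathcal{C}_i\odot\mathcal{D}_{i-1}=\{\beta\,\Phi_{i,h}(U):\ \beta\in\mathbb{F}_{q^{N_i}}^*,\ 1\le h\le s_i,\ U\in\mathcal{D}_{i-1}\}\subseteq\mathcal{G}_q(N_i,k).$$ Assume $d(\mathcal{C}_1)=2k-2$ and $d(\mathcal{C}_i)=2N_{i-1}-2$ for every $i=2,\dots,e$. Then $\mathcal{C}:=\mathcal{D}_e=\mathcal{C}_e\odot\cdots\odot\mathcal{C}_1\subseteq\mathcal{G}_q(n,k)$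 is a multi-orbit cyclic subspace code with minimum distance $2k-2$ and $|\mathcal{C}|=\prod_{i=1}^e|\mathcal{C}_i|$.
   Context: For positive integers $k\le N$, $\mathcal{G}_q(N,k)$ is the set of $k$-dimensional $\mathbb{F}_q$-subspaces of $\mathbb{F}_{q^N}$. Subspace distance $d(U,V)=\dim_{\mathbb{F}_q}(U+V)-\dim_{\mathbb{F}_q}(U\cap V)$; $d(\mathcal{C})=\min\{d(U,V):U,V\in\mathcal{C},U\ne V\}$. For $V\in\mathcal{G}_q(N,k)$, $\mathrm{Orb}_{\mathbb{F}_{q^N}^*}(V)=\{\beta V:\beta\in\mathbb{F}_{q^N}^*\}$; a multi-orbit cyclic subspace code is a union of such orbits. A one-orbit code $\mathrm{Orb}_{\mathbb{F}_{q^N}^*}(V)$ is full-length if $\{\beta\in\mathbb{F}_{q^N}^*:\beta V=V\}=\mathbb{F}_q^*$; a union of orbits is full-length if each orbit is. *)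

theory Defs
  imports "HOL-Computational_Algebra.Primes" "HOL-Library.Extended_Nat"
begin

text \<open>Ambient finite field 'a (of order q^n).  The field F_{q^N} (N dividing n) is
  realised as its unique subfield of order q^N, and F_q = subfield q 1.\<close>

definition subfield :: "nat \<Rightarrow> nat \<Rightarrow> ('a::{field,finite}) set" where
  "subfield q N = {x. x ^ (q ^ N) = x}"

definition fq_span :: "'a::field set \<Rightarrow> 'a set \<Rightarrow> 'a set" where
  "fq_span F S = {x. \<exists>c T. finite T \<and> T \<subseteq> S \<and> (\<forall>t\<in>T. c t \<in> F) \<and> x = (\<Sum>t\<in>T. c t * t)}"

definition fq_subspace :: "'a::field set \<Rightarrow> 'a set \<Rightarrow> bool" where
  "fq_subspace F U \<longleftrightarrow> 0 \<in> U \<and> (\<forall>x\<in>U. \<forall>y\<in>U. x + y \<in> U) \<and> (\<forall>c\<in>F. \<forall>x\<in>U. c * x \<in> U)"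

definition fq_dim :: "'a::field set \<Rightarrow> 'a set \<Rightarrow> nat" where
  "fq_dim F U = (LEAST d. \<exists>S. finite S \<and> S \<subseteq> U \<and> card S = d \<and> fq_span F S = U)"

definition Grass :: "nat \<Rightarrow> nat \<Rightarrow> nat \<Rightarrow> ('a::{field,finite}) set set" where
  "Grass q N k = {U. U \<subseteq> subfield q N \<and> fq_subspace (subfield q 1) U
                    \<and> fq_dim (subfield q 1) U = k}"

definition sdist :: "nat \<Rightarrow> ('a::{field,finite}) set \<Rightarrow> 'a set \<Rightarrow> nat" where
  "sdist q U V = fq_dim (subfield q 1) {u + v | u v. u \<in> U \<and> v \<in> V}
                 - fq_dim (subfield q 1) (U \<inter> V)"

text \<open>Minimum distance (\<infinity> if the code has fewer than two codewords).\<close>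
definition min_dist :: "nat \<Rightarrow> ('a::{field,finite}) set set \<Rightarrow> enat" where
  "min_dist q C = Inf {enat (sdist q U V) | U V. U \<in> C \<and> V \<in> C \<and> U \<noteq> V}"

definition orb :: "nat \<Rightarrow> nat \<Rightarrow> ('a::{field,finite}) set \<Rightarrow> 'a set set" where
  "orb q N V = {(\<lambda>x. \<beta> * x) ` V | \<beta>. \<beta> \<in> subfield q N \<and> \<beta> \<noteq> 0}"

definition full_length :: "nat \<Rightarrow> nat \<Rightarrow> ('a::{field,finite}) set \<Rightarrow> bool" where
  "full_length q N V \<longleftrightarrow>
     {\<beta> \<in> subfield q N. \<beta> \<noteq> 0 \<and> (\<lambda>x. \<beta> * x) ` V = V} = subfield q 1 - {0}"

definition cyclic_code :: "nat \<Rightarrow> nat \<Rightarrow> nat \<Rightarrow> ('a::{field,finite}) set set \<Rightarrow> bool" where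
  "cyclic_code q N k C \<longleftrightarrow> C \<subseteq> Grass q N k \<and>
     (\<exists>Vs. finite Vs \<and> Vs \<subseteq> Grass q N k \<and> C = \<Union> (orb q N ` Vs))"

definition fq_linear_on :: "nat \<Rightarrow> ('a::{field,finite}) set \<Rightarrow> ('a \<Rightarrow> 'a) \<Rightarrow> bool" where
  "fq_linear_on q A f \<longleftrightarrow> (\<forall>x\<in>A. \<forall>y\<in>A. f (x + y) = f x + f y) \<and>
     (\<forall>c\<in>subfield q 1. \<forall>x\<in>A. f (c * x) = c * f x)"

end

theory Submission
  imports Defs "HOL-Number_Theory.Residues" "HOL-Computational_Algebra.Polynomial"
begin


lemma sub_mult: "x \<in> subfield q N \<Longrightarrow> y \<in> subfield q N \<Longrightarrow> x*y \<in> subfield q N"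
  by (simp add: subfield_def power_mult_distrib)

lemma sub_inverse: "x \<in> subfield q N \<Longrightarrow> inverse x \<in> subfield q N"
  by (simp add: subfield_def power_inverse)

lemma sub_one: "1 \<in> subfield q N"
  by (simp add: subfield_def)

lemma sub_zero: "q > 0 \<Longrightarrow> 0 \<in> subfield q N"
  by (simp add: subfield_def)

lemma sub_add:
  fixes x y :: "'a::{field,finite}"
  assumes ch: "prime CHAR('a)" and qa: "q = CHAR('a) ^ a"
    and x: "x \<in> subfield q N" and y: "y \<in> subfield q N"
  shows "x + y \<in> subfield q N"
proof -
  have "q ^ N = CHAR('a) ^ (a*N)" by (simp add: qa power_mult)
  then have "(x + y) ^ (q^N) = x ^ (q^N) + y ^ (q^N)"
    using freshmans_dream'[OF ch] by blast
  with x y show ?thesis by (simp add: subfield_def)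
qed

lemma sub_uminus:
  fixes x :: "'a::{field,finite}"
  assumes ch: "prime CHAR('a)" and qa: "q = CHAR('a) ^ a"
    and x: "x \<in> subfield q N"
  shows "- x \<in> subfield q N"
proof -
  have Q: "q ^ N = CHAR('a) ^ (a*N)" by (simp add: qa power_mult)
  then have "(x + - x) ^ (q^N) = x ^ (q^N) + (-x) ^ (q^N)"
    using freshmans_dream'[OF ch] by blast
  moreover have "q ^ N > 0" using Q ch prime_gt_0_nat by simp
  moreover have "0 ^ (q^N) = (0::'a)" using \<open>q^N > 0\<close> by simp
  ultimately have "x ^ (q^N) + (-x) ^ (q^N) = 0" by simp
  with x show ?thesis by (simp add: subfield_def add_eq_0_iff)
qed

lemma F_sub:
  fixes x :: "'a::{field,finite}"
  assumes "x \<in> subfield q 1" shows "x \<in> subfield q N"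
proof -
  have "x ^ q = x" using assms by (simp add: subfield_def)
  have "x ^ (q ^ N) = x"
  proof (induction N)
    case (Suc N)
    have "x ^ (q ^ Suc N) = x ^ (q ^ N * q)" by (simp add: mult.commute)
    also have "\<dots> = (x ^ (q ^ N)) ^ q" by (rule power_mult)
    finally have "x ^ (q ^ Suc N) = (x ^ (q ^ N)) ^ q" .
    then show ?case using Suc \<open>x ^ q = x\<close> by simp
  qed simp
  then show ?thesis by (simp add: subfield_def)
qed

lemma fermat_ff:
  fixes x :: "'a :: {field,finite}"
  shows   "x ^ card (UNIV :: 'a set) = x"
proof (cases "x = 0")
  case False
  have "x * (\<Prod>y\<in>UNIV-{0}. x * y) = x * x ^ (card (UNIV :: 'a set) - 1) * \<Prod>(UNIV-{0})"
    by (simp add: prod.distrib mult_ac)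
  also have "x * x ^ (card (UNIV :: 'a set) - 1) = x ^ Suc (card (UNIV :: 'a set) - 1)"
    by (subst power_Suc) auto
  also have "Suc (card (UNIV :: 'a set) - 1) = card (UNIV :: 'a set)"
    using finite_UNIV_card_ge_0[where ?'a = 'a] by simp
  also have "(\<Prod>y\<in>UNIV-{0}. x * y) = (\<Prod>y\<in>UNIV-{0}. y)"
    by (rule prod.reindex_bij_witness[of _ "\<lambda>y. y / x" "\<lambda>y. x * y"]) (use False in auto)
  finally show ?thesis
    by simp
qed (use finite_UNIV_card_ge_0[where ?'a = 'a] in auto)

lemma fermat_pow:
  fixes x :: "'a :: {field,finite}"
  shows "x ^ (card (UNIV :: 'a set) ^ j) = x"
  by (induction j) (simp_all add: fermat_ff power_mult mult.commute)

lemma card_sub_le: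
  assumes "q \<ge> 2" "N \<ge> 1"
  shows "card (subfield q N :: 'a::{field,finite} set) \<le> q ^ N"
proof -
  define P :: "'a poly" where "P = monom 1 (q^N) - monom 1 1"
  have "q \<le> q ^ N" using power_increasing[of 1 N q] assms by simp
  then have qN: "q ^ N \<ge> 2" using assms by linarith
  have "coeff P (q^N) = 1" using qN by (simp add: P_def coeff_monom)
  then have "P \<noteq> 0" by auto
  have "degree P \<le> q ^ N" unfolding P_def
    by (rule degree_diff_le) (use qN in \<open>auto simp: degree_monom_eq\<close>)
  have "subfield q N = {x. poly P x = 0}"
    by (auto simp: P_def subfield_def poly_monom)
  then have "card (subfield q N :: 'a set) = card {x. poly P x = 0}" by simp
  also have "\<dots> \<le> degree P" by (rule card_poly_roots_bound[OF \<open>P \<noteq> 0\<close>])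
  finally show ?thesis using \<open>degree P \<le> q^N\<close> by simp
qed

lemma geom_nat: "q \<ge> 1 \<Longrightarrow> (q - 1) * (\<Sum>i<n. q ^ i) + 1 = (q::nat) ^ n"
proof (induction n)
  case (Suc n)
  have "(q - 1) * (\<Sum>i<Suc n. q ^ i) + 1 = ((q - 1) * (\<Sum>i<n. q ^ i) + 1) + (q - 1) * q ^ n"
    by (simp add: algebra_simps)
  also have "\<dots> = q ^ n + (q - 1) * q ^ n" using Suc by simp
  also have "\<dots> = q ^ Suc n" using Suc.prems by (simp add: algebra_simps)
  finally show ?case .
qed simp

lemma card_F_ge:
  assumes q2: "q \<ge> 2" and card: "card (UNIV :: 'a::{field,finite} set) = q ^ n" and n: "n > 0"
  shows "q \<le> card (subfield q 1 :: 'a set)"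
proof -
  define M where "M = (\<Sum>i<n. q ^ i)"
  have M: "(q - 1) * M + 1 = q ^ n" unfolding M_def using geom_nat q2 by simp
  have M1: "M \<ge> 1" unfolding M_def using n by (simp add: sum.remove[of "{..<n}" 0])
  define g :: "'a poly" where "g = (\<Sum>j<M. monom 1 ((q - 1) * j))"
  have pg: "poly g x = (\<Sum>j<M. (x ^ (q-1)) ^ j)" for x
    by (simp add: g_def poly_sum poly_monom power_mult)
  have "poly g 0 = 1"
    unfolding pg using M1 q2 by (simp add: sum.remove[of "{..<M}" 0] power_0_left)
  then have "g \<noteq> 0" by auto
  have "degree g \<le> (q - 1) * (M - 1)" unfolding g_def
    by (rule degree_sum_le) (auto intro!: order_trans[OF degree_monom_le] mult_le_mono2)
  have "(q - 1) * (M - 1) = (q - 1) * M - (q - 1)" by (simp add: diff_mult_distrib2)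
  then have "(q - 1) * (M - 1) = q ^ n - q"
    using M q2 by linarith
  have cover: "UNIV \<subseteq> subfield q 1 \<union> {x::'a. poly g x = 0}"
  proof
    fix x :: 'a
    have "x ^ q = x ^ Suc (q-1)" using q2 by simp
    then have xq: "x ^ q = x * x ^ (q-1)" by simp
    define y where "y = x ^ (q - 1)"
    have "(x * y - x) * (\<Sum>j<M. y ^ j) = x * ((y - 1) * (\<Sum>j<M. y ^ j))"
      by (simp add: algebra_simps)
    also have "\<dots> = x * (y ^ M - 1)" by (simp add: power_diff_1_eq)
    finally have "(x ^ q - x) * poly g x = x * ((x ^ (q-1)) ^ M - 1)"
      unfolding pg xq y_def .
    also have "\<dots> = x * x^((q-1)*M) - x" by (simp add: power_mult right_diff_distrib)
    also have "\<dots> = x ^ ((q-1)*M + 1) - x" by simp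
    also have "\<dots> = 0" using M fermat_pow[of x 1] card by simp
    finally have "(x ^ q - x) * poly g x = 0" .
    then show "x \<in> subfield q 1 \<union> {x::'a. poly g x = 0}" by (auto simp: subfield_def)
  qed
  have c1: "card (UNIV::'a set) \<le> card (subfield q 1 \<union> {x::'a. poly g x = 0})"
    by (rule card_mono[OF _ cover]) simp
  have c2: "card (subfield q 1 \<union> {x::'a. poly g x = 0}) \<le> card (subfield q 1 :: 'a set) + card {x::'a. poly g x = 0}"
    by (rule card_Un_le)
  have c3: "card {x::'a. poly g x = 0} \<le> degree g"
    by (rule card_poly_roots_bound[OF \<open>g \<noteq> 0\<close>])
  have c4: "q \<le> q ^ n" using power_increasing[of 1 n q] n q2 by simp
  show ?thesis using c1 c2 c3 c4 card \<open>degree g \<le> _\<close> \<open>(q - 1) * (M - 1) = q ^ n - q\<close> by linarith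
qed


definition subfld :: "'a::field set \<Rightarrow> bool" where
  "subfld F \<longleftrightarrow> 0 \<in> F \<and> 1 \<in> F \<and> (\<forall>x\<in>F. \<forall>y\<in>F. x + y \<in> F) \<and> (\<forall>x\<in>F. - x \<in> F)
     \<and> (\<forall>x\<in>F. \<forall>y\<in>F. x * y \<in> F) \<and> (\<forall>x\<in>F. inverse x \<in> F)"

lemma sum_in_subspace:
  assumes U: "fq_subspace F U" and "finite T" "T \<subseteq> U" "\<forall>t\<in>T. c t \<in> F"
  shows "(\<Sum>t\<in>T. c t * t) \<in> U"
  using assms(2-4)
proof (induction T rule: finite_induct)
  case empty then show ?case using U by (simp add: fq_subspace_def)
next
  case (insert x T)
  then have "c x * x \<in> U" using U by (auto simp: fq_subspace_def)
  moreover have "(\<Sum>t\<in>T. c t * t) \<in> U" using insert by auto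
  ultimately show ?case using insert U by (simp add: fq_subspace_def)
qed

lemma span_sub:
  assumes "fq_subspace F U" "S \<subseteq> U"
  shows "fq_span F S \<subseteq> U"
  using assms sum_in_subspace unfolding fq_span_def by blast

lemma span_self:
  assumes "fq_subspace F U" "1 \<in> F"
  shows "fq_span F U = U"
proof
  show "fq_span F U \<subseteq> U" using span_sub assms by blast
next
  show "U \<subseteq> fq_span F U"
  proof
    fix x assume "x \<in> U"
    then show "x \<in> fq_span F U" unfolding fq_span_def
      using assms(2) by (intro CollectI exI[of _ "\<lambda>_. 1"] exI[of _ "{x}"]) auto
  qed
qed

lemma card_subspace:
  fixes U :: "'a::field set"
  assumes F: "subfld F" and fin: "finite U" and U: "fq_subspace F U"
  shows "card U = card F ^ fq_dim F U"
proof -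
  define P where "P d \<longleftrightarrow> (\<exists>S. finite S \<and> S \<subseteq> U \<and> card S = d \<and> fq_span F S = U)" for d
  have F1: "1 \<in> F" "0 \<in> F" using F by (auto simp: subfld_def)
  have Fadd: "x + y \<in> F" if "x \<in> F" "y \<in> F" for x y using F that by (auto simp: subfld_def)
  have Fmul: "x * y \<in> F" if "x \<in> F" "y \<in> F" for x y using F that by (auto simp: subfld_def)
  have Fneg: "- x \<in> F" if "x \<in> F" for x using F that by (auto simp: subfld_def)
  have Finv: "inverse x \<in> F" if "x \<in> F" for x using F that by (auto simp: subfld_def)
  have Fdiff: "x - y \<in> F" if "x \<in> F" "y \<in> F" for x y
    using Fadd[OF that(1) Fneg[OF that(2)]] by simp
  have Fdiv: "x / y \<in> F" if "x \<in> F" "y \<in> F" for x y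
    using Fmul[OF that(1) Finv[OF that(2)]] by (simp add: divide_inverse)
  have "P (card U)" unfolding P_def using fin span_self[OF U F1(1)] by blast
  then have "P (LEAST d. P d)" by (rule LeastI)
  moreover have dimdef: "fq_dim F U = (LEAST d. P d)" unfolding fq_dim_def P_def by simp
  ultimately obtain S where S: "finite S" "S \<subseteq> U" "card S = fq_dim F U" "fq_span F S = U"
    unfolding P_def by auto
  have minimal: "fq_dim F U \<le> card S'" if "finite S'" "S' \<subseteq> U" "fq_span F S' = U" for S'
    unfolding dimdef by (rule Least_le) (use that in \<open>auto simp: P_def\<close>)
  define L where "L c = (\<Sum>t\<in>S. c t * t)" for c
  define A where "A = PiE S (\<lambda>_. F)"
  have surj: "\<exists>c\<in>A. x = L c" if "x \<in> U" for x
  proof -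
    from that S(4) obtain c T where cT: "finite T" "T \<subseteq> S" "\<forall>t\<in>T. c t \<in> F"
        "x = (\<Sum>t\<in>T. c t * t)"
      unfolding fq_span_def by blast
    define c' where "c' = restrict (\<lambda>t. if t \<in> T then c t else 0) S"
    have "c' \<in> A" unfolding c'_def A_def using cT F1 by (auto simp: restrict_PiE_iff)
    have "L c' = (\<Sum>t\<in>S. if t \<in> T then c t * t else 0)"
      unfolding L_def c'_def by (rule sum.cong) auto
    also have "\<dots> = (\<Sum>t\<in>S \<inter> T. c t * t)"
      by (rule sum.inter_restrict[symmetric]) (use S in auto)
    also have "S \<inter> T = T" using cT by auto
    finally have "L c' = x" using cT by simp
    then show ?thesis using \<open>c' \<in> A\<close> by blast
  qed
  have into: "L c \<in> U" if "c \<in> A" for c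
  proof -
    have "L c \<in> fq_span F S" unfolding fq_span_def L_def
      using that S(1) unfolding A_def by (intro CollectI exI[of _ c] exI[of _ S]) auto
    then show ?thesis using S by simp
  qed
  have inj: "inj_on L A"
  proof
    fix c c' assume c: "c \<in> A" and c': "c' \<in> A" and eq: "L c = L c'"
    show "c = c'"
    proof (rule ccontr)
      assume "c \<noteq> c'"
      then obtain t0 where t0: "t0 \<in> S" "c t0 \<noteq> c' t0"
        using PiE_ext[of c S "\<lambda>_. F" c'] c c' unfolding A_def by blast
      define d where "d t = c t - c' t" for t
      have dF: "d t \<in> F" if "t \<in> S" for t
        using c c' that unfolding A_def d_def by (auto intro!: Fdiff)
      have d0: "d t0 \<noteq> 0" using t0 by (simp add: d_def)
      have sum0: "(\<Sum>t\<in>S. d t * t) = 0"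
        using eq unfolding L_def d_def by (simp add: left_diff_distrib sum_subtractf)
      have rem: "(\<Sum>t\<in>S. f t) = f t0 + (\<Sum>t\<in>S - {t0}. f t)" for f :: "'a \<Rightarrow> 'a"
        using S(1) t0(1) by (rule sum.remove)
      have h: "d t0 * t0 + (\<Sum>t\<in>S - {t0}. d t * t) = 0"
        using sum0 rem[of "\<lambda>t. d t * t"] by simp
      have B: "(\<Sum>t\<in>S - {t0}. d t * t) = - (d t0 * t0)"
        unfolding eq_neg_iff_add_eq_0 using h by (simp add: add.commute)
      have span': "fq_span F (S - {t0}) = U"
      proof
        show "fq_span F (S - {t0}) \<subseteq> U" using span_sub[OF U] S(2) by blast
      next
        show "U \<subseteq> fq_span F (S - {t0})"
        proof
          fix x assume "x \<in> U"
          then obtain e where e: "e \<in> A" "x = L e" using surj by blast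
          define \<kappa> where "\<kappa> = e t0 / d t0"
          define e' where "e' t = e t - \<kappa> * d t" for t
          have eF: "e t \<in> F" if "t \<in> S" for t using e that unfolding A_def by auto
          have e'F: "\<forall>t\<in>S - {t0}. e' t \<in> F"
            unfolding e'_def \<kappa>_def using eF dF t0 by (auto intro!: Fdiff Fmul Fdiv)
          have "(\<Sum>t\<in>S - {t0}. e' t * t) = (\<Sum>t\<in>S - {t0}. e t * t - \<kappa> * (d t * t))"
            by (rule sum.cong) (auto simp: e'_def algebra_simps)
          also have "\<dots> = (\<Sum>t\<in>S - {t0}. e t * t) - \<kappa> * (\<Sum>t\<in>S - {t0}. d t * t)"
            by (simp add: sum_subtractf sum_distrib_left)
          also have "\<dots> = (\<Sum>t\<in>S - {t0}. e t * t) + (\<kappa> * d t0) * t0"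
            unfolding B by (simp add: algebra_simps)
          also have "\<kappa> * d t0 = e t0" unfolding \<kappa>_def using d0 by simp
          also have "(\<Sum>t\<in>S - {t0}. e t * t) + e t0 * t0 = L e"
            unfolding L_def using rem[of "\<lambda>t. e t * t"] by (simp add: add.commute)
          finally have "x = (\<Sum>t\<in>S - {t0}. e' t * t)" using e by simp
          then show "x \<in> fq_span F (S - {t0})" unfolding fq_span_def
            using S(1) e'F by (intro CollectI exI[of _ e'] exI[of _ "S - {t0}"]) auto
        qed
      qed
      have "fq_dim F U \<le> card (S - {t0})"
        by (rule minimal) (use S span' in auto)
      moreover have "card (S - {t0}) < card S" using S(1) t0(1) by (meson card_Diff1_less)
      ultimately show False using S(3) by simp
    qed
  qed
  have "bij_betw L A U"
    unfolding bij_betw_def using inj into surj by blast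
  then have "card U = card A" by (simp add: bij_betw_same_card)
  also have "card A = card F ^ card S" unfolding A_def using S(1) by (simp add: card_PiE)
  finally show ?thesis using S(3) by simp
qed


definition ffcond :: "nat \<Rightarrow> nat \<Rightarrow> 'a::{field,finite} itself \<Rightarrow> bool" where
  "ffcond q n T \<longleftrightarrow> prime CHAR('a) \<and> (\<exists>a>0. q = CHAR('a) ^ a) \<and> card (UNIV::'a set) = q ^ n \<and> n > 0"

lemma ffs_q2:
  assumes "ffcond q n TYPE('a::{field,finite})" shows "q \<ge> 2"
proof -
  from assms obtain a where a: "a > 0" "q = CHAR('a) ^ a" and p: "prime CHAR('a)"
    unfolding ffcond_def by blast
  have "CHAR('a) \<ge> 2" using p prime_ge_2_nat by blast
  moreover have "CHAR('a) ^ 1 \<le> CHAR('a) ^ a" by (rule power_increasing) (use a prime_gt_0_nat[OF p] in auto)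
  ultimately show ?thesis using a by simp
qed

lemma ffs_add:
  fixes x y :: "'a::{field,finite}"
  assumes "ffcond q n TYPE('a)" "x \<in> subfield q N" "y \<in> subfield q N"
  shows "x + y \<in> subfield q N"
  using assms sub_add unfolding ffcond_def by blast

lemma ffs_neg:
  fixes x :: "'a::{field,finite}"
  assumes "ffcond q n TYPE('a)" "x \<in> subfield q N"
  shows "- x \<in> subfield q N"
  using assms sub_uminus unfolding ffcond_def by blast

lemma ffs_zero:
  assumes "ffcond q n TYPE('a::{field,finite})" shows "(0::'a) \<in> subfield q N"
  using ffs_q2[OF assms] sub_zero[of q] by simp

lemma ffs_subfld:
  assumes "ffcond q n TYPE('a::{field,finite})" shows "subfld (subfield q 1 :: 'a set)"
  unfolding subfld_def by (intro conjI ballI)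
    (simp_all add: ffs_add[OF assms] ffs_neg[OF assms] ffs_zero[OF assms] sub_one sub_mult sub_inverse)

lemma ffs_cardF:
  assumes "ffcond q n TYPE('a::{field,finite})" shows "card (subfield q 1 :: 'a set) = q"
proof -
  have "card (subfield q 1 :: 'a set) \<le> q ^ 1" using card_sub_le[of q 1] ffs_q2[OF assms] by simp
  moreover have "q \<le> card (subfield q 1 :: 'a set)"
    using card_F_ge[of q n] ffs_q2[OF assms] assms unfolding ffcond_def by blast
  ultimately show ?thesis by simp
qed

lemma card_sp:
  fixes U :: "'a::{field,finite} set"
  assumes "ffcond q n TYPE('a)" "fq_subspace (subfield q 1) U"
  shows "card U = q ^ fq_dim (subfield q 1) U"
  using card_subspace[OF ffs_subfld[OF assms(1)] _ assms(2)] ffs_cardF[OF assms(1)] by simp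

lemma dim_from_card:
  fixes U :: "'a::{field,finite} set"
  assumes "ffcond q n TYPE('a)" "fq_subspace (subfield q 1) U" "card U = q ^ d"
  shows "fq_dim (subfield q 1) U = d"
proof -
  have "q ^ fq_dim (subfield q 1) U = q ^ d" using card_sp[OF assms(1,2)] assms(3) by simp
  then show ?thesis using ffs_q2[OF assms(1)] by simp
qed

lemma dim_mono:
  fixes X Y :: "'a::{field,finite} set"
  assumes "ffcond q n TYPE('a)" "fq_subspace (subfield q 1) X" "fq_subspace (subfield q 1) Y" "X \<subseteq> Y"
  shows "fq_dim (subfield q 1) X \<le> fq_dim (subfield q 1) Y"
proof -
  have "card X \<le> card Y" using assms(4) by (simp add: card_mono)
  then have "q ^ fq_dim (subfield q 1) X \<le> q ^ fq_dim (subfield q 1) Y"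
    using card_sp[OF assms(1,2)] card_sp[OF assms(1,3)] by simp
  then show ?thesis using ffs_q2[OF assms(1)] by simp
qed

lemma subfield_subspace:
  assumes "ffcond q n TYPE('a::{field,finite})"
  shows "fq_subspace (subfield q 1) (subfield q N :: 'a set)"
  unfolding fq_subspace_def using ffs_zero[OF assms] ffs_add[OF assms] sub_mult F_sub by blast

lemma subspace_neg:
  assumes "subfld F" "fq_subspace F U" "x \<in> U"
  shows "- x \<in> U"
proof -
  have "- 1 \<in> F" using assms(1) by (auto simp: subfld_def)
  then have "(- 1) * x \<in> U" using assms(2,3) by (auto simp: fq_subspace_def)
  then show ?thesis by simp
qed

lemma subspace_sum:
  fixes X Y :: "'a::field set"
  assumes "fq_subspace F X" "fq_subspace F Y"
  shows "fq_subspace F {u + v | u v. u \<in> X \<and> v \<in> Y}"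
  unfolding fq_subspace_def
proof (intro conjI ballI)
  have h: "0 \<in> X" "0 \<in> Y" using assms by (auto simp: fq_subspace_def)
  have "(0::'a) = 0 + 0" by simp
  then show "0 \<in> {u + v | u v. u \<in> X \<and> v \<in> Y}" using h by blast
next
  fix x y assume "x \<in> {u + v | u v. u \<in> X \<and> v \<in> Y}" "y \<in> {u + v | u v. u \<in> X \<and> v \<in> Y}"
  then obtain u v u' v' where "x = u + v" "y = u' + v'" "u \<in> X" "v \<in> Y" "u' \<in> X" "v' \<in> Y" by blast
  moreover have "x + y = (u + u') + (v + v')" using calculation by (simp add: algebra_simps)
  ultimately show "x + y \<in> {u + v | u v. u \<in> X \<and> v \<in> Y}" using assms unfolding fq_subspace_def by blast
next
  fix c x assume "c \<in> F" "x \<in> {u + v | u v. u \<in> X \<and> v \<in> Y}"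
  then obtain u v where "x = u + v" "u \<in> X" "v \<in> Y" by blast
  moreover have "c * x = c * u + c * v" using calculation by (simp add: algebra_simps)
  ultimately show "c * x \<in> {u + v | u v. u \<in> X \<and> v \<in> Y}" using assms \<open>c \<in> F\<close> unfolding fq_subspace_def by blast
qed

lemma subspace_int:
  assumes "fq_subspace F X" "fq_subspace F Y"
  shows "fq_subspace F (X \<inter> Y)"
  using assms unfolding fq_subspace_def by blast

lemma card_sum_int:
  fixes X Y :: "'a::{field,finite} set"
  assumes F: "subfld F" and X: "fq_subspace F X" and Y: "fq_subspace F Y"
  shows "card {u + v | u v. u \<in> X \<and> v \<in> Y} * card (X \<inter> Y) = card X * card Y"
proof -
  define Z where "Z = {u + v | u v. u \<in> X \<and> v \<in> Y}"
  define pick where "pick z = (SOME p. p \<in> X \<times> Y \<and> fst p + snd p = z)" for z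
  have pick: "pick z \<in> X \<times> Y \<and> fst (pick z) + snd (pick z) = z" if "z \<in> Z" for z
  proof -
    from that obtain u v where "z = u + v" "u \<in> X" "v \<in> Y" unfolding Z_def by blast
    then have "\<exists>p. p \<in> X \<times> Y \<and> fst p + snd p = z" by (intro exI[of _ "(u,v)"]) auto
    then show ?thesis unfolding pick_def by (rule someI_ex)
  qed
  have Xa: "a + b \<in> X" if "a \<in> X" "b \<in> X" for a b using X that by (auto simp: fq_subspace_def)
  have Ya: "a + b \<in> Y" if "a \<in> Y" "b \<in> Y" for a b using Y that by (auto simp: fq_subspace_def)
  have Xd: "a - b \<in> X" if "a \<in> X" "b \<in> X" for a b
    using Xa[OF that(1) subspace_neg[OF F X that(2)]] by simp
  have Yd: "a - b \<in> Y" if "a \<in> Y" "b \<in> Y" for a b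
    using Ya[OF that(1) subspace_neg[OF F Y that(2)]] by simp
  define f where "f = (\<lambda>(z, w). (fst (pick z) + w, snd (pick z) - w))"
  define g where "g = (\<lambda>(x, y). (x + y, x - fst (pick (x + y))))"
  have "bij_betw f (Z \<times> (X \<inter> Y)) (X \<times> Y)"
  proof (rule bij_betw_byWitness[where f' = g])
    show "\<forall>a\<in>Z \<times> (X \<inter> Y). g (f a) = a"
    proof
      fix a assume "a \<in> Z \<times> (X \<inter> Y)"
      then obtain z w where a: "a = (z, w)" "z \<in> Z" by auto
      have "fst (pick z) + w + (snd (pick z) - w) = z" using pick[OF a(2)] by (simp add: algebra_simps)
      then show "g (f a) = a" unfolding a f_def g_def by simp
    qed
    show "\<forall>a\<in>X \<times> Y. f (g a) = a"
    proof
      fix a assume "a \<in> X \<times> Y"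
      then obtain x y where a: "a = (x, y)" "x \<in> X" "y \<in> Y" by auto
      have z: "x + y \<in> Z" using a unfolding Z_def by blast
      have "snd (pick (x + y)) - (x - fst (pick (x + y))) = y"
        using pick[OF z] by (simp add: algebra_simps)
      then show "f (g a) = a" unfolding a f_def g_def by simp
    qed
    show "f ` (Z \<times> (X \<inter> Y)) \<subseteq> X \<times> Y"
    proof
      fix b assume "b \<in> f ` (Z \<times> (X \<inter> Y))"
      then obtain z w where b: "b = f (z, w)" "z \<in> Z" "w \<in> X" "w \<in> Y" by auto
      show "b \<in> X \<times> Y" unfolding b f_def using pick[OF b(2)] Xa Yd b by auto
    qed
    show "g ` (X \<times> Y) \<subseteq> Z \<times> (X \<inter> Y)"
    proof
      fix b assume "b \<in> g ` (X \<times> Y)"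
      then obtain x y where b: "b = g (x, y)" "x \<in> X" "y \<in> Y" by auto
      have z: "x + y \<in> Z" using b unfolding Z_def by blast
      have e: "x - fst (pick (x + y)) = snd (pick (x + y)) - y"
        using pick[OF z] by (simp add: algebra_simps)
      have "x - fst (pick (x + y)) \<in> X" using Xd b pick[OF z] by auto
      moreover have "x - fst (pick (x + y)) \<in> Y" unfolding e using Yd b pick[OF z] by auto
      ultimately show "b \<in> Z \<times> (X \<inter> Y)" unfolding b g_def using z by auto
    qed
  qed
  then have "card (Z \<times> (X \<inter> Y)) = card (X \<times> Y)" by (rule bij_betw_same_card)
  then show ?thesis unfolding Z_def by (simp add: card_cartesian_product)
qed

lemma sdist_formula:
  fixes X Y :: "'a::{field,finite} set"
  assumes s: "ffcond q n TYPE('a)" and X: "fq_subspace (subfield q 1) X" and Y: "fq_subspace (subfield q 1) Y"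
    and dX: "fq_dim (subfield q 1) X = k" and dY: "fq_dim (subfield q 1) Y = k"
  shows "sdist q X Y = 2 * k - 2 * fq_dim (subfield q 1) (X \<inter> Y)
       \<and> fq_dim (subfield q 1) (X \<inter> Y) \<le> k"
proof -
  let ?F = "subfield q 1 :: 'a set"
  let ?Z = "{u + v | u v. u \<in> X \<and> v \<in> Y}"
  have Z: "fq_subspace ?F ?Z" by (rule subspace_sum[OF X Y])
  have I: "fq_subspace ?F (X \<inter> Y)" by (rule subspace_int[OF X Y])
  have "card ?Z * card (X \<inter> Y) = card X * card Y"
    by (rule card_sum_int[OF ffs_subfld[OF s] X Y])
  then have "q ^ (fq_dim ?F ?Z + fq_dim ?F (X \<inter> Y)) = q ^ (k + k)"
    using card_sp[OF s X] card_sp[OF s Y] card_sp[OF s Z] card_sp[OF s I] dX dY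
    by (simp add: power_add)
  then have sum: "fq_dim ?F ?Z + fq_dim ?F (X \<inter> Y) = k + k"
    using ffs_q2[OF s] by simp
  have le: "fq_dim ?F (X \<inter> Y) \<le> k" using dim_mono[OF s I X] dX by auto
  show ?thesis unfolding sdist_def using sum le by simp
qed

lemma lin_zero:
  fixes g :: "'a::{field,finite} \<Rightarrow> 'a"
  assumes "fq_linear_on q A g" "0 \<in> A" shows "g 0 = 0"
proof -
  have "g (0 + 0) = g 0 + g 0" using assms unfolding fq_linear_on_def by blast
  then have h: "g 0 = g 0 + g 0" by simp
  then show ?thesis by (metis add_cancel_right_right)
qed

lemma lin_image_subspace:
  fixes g :: "'a::{field,finite} \<Rightarrow> 'a"
  assumes g: "fq_linear_on q A g" and ZA: "Z \<subseteq> A" and Z: "fq_subspace (subfield q 1) Z"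
  shows "fq_subspace (subfield q 1) (g ` Z)"
proof -
  have "0 \<in> Z" using Z by (simp add: fq_subspace_def)
  then have g0: "g 0 = 0" using lin_zero[OF g] ZA by blast
  show ?thesis unfolding fq_subspace_def
  proof (intro conjI ballI)
    show "0 \<in> g ` Z" using g0 \<open>0 \<in> Z\<close> by force
  next
    fix x y assume "x \<in> g ` Z" "y \<in> g ` Z"
    then obtain u v where "u \<in> Z" "v \<in> Z" "x = g u" "y = g v" by blast
    moreover have "g (u + v) = g u + g v" using g ZA calculation unfolding fq_linear_on_def by blast
    moreover have "u + v \<in> Z" using Z calculation unfolding fq_subspace_def by blast
    ultimately show "x + y \<in> g ` Z" by force
  next
    fix c :: 'a and x assume "c \<in> subfield q 1" "x \<in> g ` Z"
    then obtain u where "u \<in> Z" "x = g u" by blast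
    moreover have "g (c * u) = c * g u" using g ZA calculation \<open>c \<in> subfield q 1\<close> unfolding fq_linear_on_def by blast
    moreover have "c * u \<in> Z" using Z calculation \<open>c \<in> subfield q 1\<close> unfolding fq_subspace_def by blast
    ultimately show "c * x \<in> g ` Z" by force
  qed
qed

lemma lin_image_sum:
  fixes g :: "'a::{field,finite} \<Rightarrow> 'a"
  assumes g: "fq_linear_on q A g" and "Z1 \<subseteq> A" "Z2 \<subseteq> A"
  shows "g ` {u + v | u v. u \<in> Z1 \<and> v \<in> Z2} = {u + v | u v. u \<in> g ` Z1 \<and> v \<in> g ` Z2}"
proof -
  have "g (u + v) = g u + g v" if "u \<in> Z1" "v \<in> Z2" for u v
    using g assms that unfolding fq_linear_on_def by blast
  then show ?thesis by (auto simp: image_iff) (metis)+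
qed

lemma dim_image:
  fixes Z :: "'a::{field,finite} set"
  assumes s: "ffcond q n TYPE('a)" and g: "fq_linear_on q A g" "inj_on g A"
    and ZA: "Z \<subseteq> A" and Z: "fq_subspace (subfield q 1) Z"
  shows "fq_dim (subfield q 1) (g ` Z) = fq_dim (subfield q 1) Z"
proof -
  have "card (g ` Z) = card Z" using g(2) ZA by (meson card_image inj_on_subset)
  then show ?thesis using card_sp[OF s Z] dim_from_card[OF s lin_image_subspace[OF g(1) ZA Z]] by simp
qed

lemma sdist_image:
  fixes Z1 Z2 :: "'a::{field,finite} set"
  assumes s: "ffcond q n TYPE('a)" and g: "fq_linear_on q A g" "inj_on g A"
    and A: "fq_subspace (subfield q 1) A"
    and Z: "Z1 \<subseteq> A" "Z2 \<subseteq> A" "fq_subspace (subfield q 1) Z1" "fq_subspace (subfield q 1) Z2"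
  shows "sdist q (g ` Z1) (g ` Z2) = sdist q Z1 Z2"
proof -
  let ?S = "{u + v | u v. u \<in> Z1 \<and> v \<in> Z2}"
  have SA: "?S \<subseteq> A" using A Z unfolding fq_subspace_def by blast
  have "g ` ?S = {u + v | u v. u \<in> g ` Z1 \<and> v \<in> g ` Z2}" by (rule lin_image_sum[OF g(1) Z(1,2)])
  moreover have "g ` (Z1 \<inter> Z2) = g ` Z1 \<inter> g ` Z2" using g(2) Z(1,2) by (meson inj_on_image_Int)
  moreover have "fq_dim (subfield q 1) (g ` ?S) = fq_dim (subfield q 1) ?S"
    by (rule dim_image[OF s g SA subspace_sum[OF Z(3,4)]])
  moreover have "fq_dim (subfield q 1) (g ` (Z1 \<inter> Z2)) = fq_dim (subfield q 1) (Z1 \<inter> Z2)"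
    by (rule dim_image[OF s g _ subspace_int[OF Z(3,4)]]) (use Z in auto)
  ultimately show ?thesis unfolding sdist_def by simp
qed

lemma lin_scale:
  fixes \<Phi> :: "'a::{field,finite} \<Rightarrow> 'a"
  assumes "fq_linear_on q A \<Phi>"
  shows "fq_linear_on q A (\<lambda>x. \<beta> * \<Phi> x)"
  using assms unfolding fq_linear_on_def by (simp add: algebra_simps)

lemma inj_scale:
  fixes \<beta> :: "'a::field"
  assumes "inj_on \<Phi> A" "\<beta> \<noteq> 0"
  shows "inj_on (\<lambda>x. \<beta> * \<Phi> x) A"
  using assms unfolding inj_on_def by simp


lemma scale_scale: "(\<lambda>x. c * x) ` ((\<lambda>x. d * x) ` V) = (\<lambda>x. (c * d) * x) ` (V :: 'a::field set)"
  by (simp add: image_image mult.assoc)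

lemma orb_sub:
  fixes V V' :: "'a::{field,finite} set"
  assumes "\<beta> \<in> subfield q M" "\<beta> \<noteq> 0" "\<beta>' \<in> subfield q M" "\<beta>' \<noteq> 0"
    and eq: "(\<lambda>x. \<beta> * x) ` V = (\<lambda>x. \<beta>' * x) ` V'"
  shows "orb q M V \<subseteq> orb q M V'"
proof
  fix W assume "W \<in> orb q M V"
  then obtain \<gamma> where g: "\<gamma> \<in> subfield q M" "\<gamma> \<noteq> 0" "W = (\<lambda>x. \<gamma> * x) ` V"
    unfolding orb_def by blast
  have "W = (\<lambda>x. (\<gamma> * inverse \<beta>) * x) ` ((\<lambda>x. \<beta> * x) ` V)"
    unfolding scale_scale g(3) using assms(2) by (simp add: mult.assoc)
  also have "\<dots> = (\<lambda>x. (\<gamma> * inverse \<beta> * \<beta>') * x) ` V'"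
    unfolding eq scale_scale ..
  finally have "W = (\<lambda>x. (\<gamma> * inverse \<beta> * \<beta>') * x) ` V'" .
  moreover have "\<gamma> * inverse \<beta> * \<beta>' \<in> subfield q M"
    using assms g by (simp add: sub_mult sub_inverse)
  moreover have "\<gamma> * inverse \<beta> * \<beta>' \<noteq> 0" using assms g by simp
  ultimately show "W \<in> orb q M V'" unfolding orb_def by blast
qed

lemma stab:
  fixes V :: "'a::field set"
  assumes "(\<lambda>x. \<beta> * x) ` V = (\<lambda>x. \<beta>' * x) ` V" "\<beta>' \<noteq> 0"
  shows "(\<lambda>x. (inverse \<beta>' * \<beta>) * x) ` V = V"
proof -
  have "(\<lambda>x. (inverse \<beta>' * \<beta>) * x) ` V = (\<lambda>x. inverse \<beta>' * x) ` ((\<lambda>x. \<beta> * x) ` V)"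
    unfolding scale_scale ..
  also have "\<dots> = (\<lambda>x. (inverse \<beta>' * \<beta>') * x) ` V" unfolding assms(1) scale_scale ..
  finally show ?thesis using assms(2) by simp
qed

lemma scale_subspace_eq:
  fixes Z :: "'a::{field,finite} set"
  assumes "\<gamma> \<in> subfield q 1" "\<gamma> \<noteq> 0" "fq_subspace (subfield q 1) Z"
  shows "(\<lambda>x. \<gamma> * x) ` Z = Z"
proof (rule card_subset_eq)
  show "finite Z" by simp
  show "(\<lambda>x. \<gamma> * x) ` Z \<subseteq> Z" using assms unfolding fq_subspace_def by blast
  have "inj_on (\<lambda>x. \<gamma> * x) Z" using assms(2) unfolding inj_on_def by simp
  then show "card ((\<lambda>x. \<gamma> * x) ` Z) = card Z" by (rule card_image)
qed

lemma min_dist_le: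
  assumes "min_dist q C = enat d" "X \<in> C" "Y \<in> C" "X \<noteq> Y"
  shows "d \<le> sdist q X Y"
proof -
  have "min_dist q C \<le> enat (sdist q X Y)" unfolding min_dist_def
    by (rule Inf_lower) (use assms in blast)
  then show ?thesis using assms(1) by simp
qed

lemma min_dist_ne:
  assumes "min_dist q C = enat d"
  shows "\<exists>X\<in>C. \<exists>Y\<in>C. X \<noteq> Y \<and> sdist q X Y = d"
proof -
  define A where "A = {enat (sdist q U V) | U V. U \<in> C \<and> V \<in> C \<and> U \<noteq> V}"
  have md: "min_dist q C = Inf A" unfolding min_dist_def A_def ..
  have ne: "A \<noteq> {}"
  proof
    assume "A = {}"
    then have "min_dist q C = \<infinity>" unfolding md by (simp add: Inf_enat_def)
    then show False using assms by simp
  qed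
  then obtain a where "a \<in> A" by blast
  then have "(LEAST x. x \<in> A) \<in> A" by (rule LeastI)
  moreover have "Inf A = (LEAST x. x \<in> A)" using ne by (simp add: Inf_enat_def)
  ultimately have "enat d \<in> A" using assms md by simp
  then show ?thesis unfolding A_def by auto
qed


lemma step:
  fixes \<Phi> :: "nat \<Rightarrow> 'a::{field,finite} \<Rightarrow> 'a" and Cc D D' :: "'a set set"
  assumes s: "ffcond q n TYPE('a)"
    and k: "1 < k"
    and Phi: "\<forall>h\<in>{1..S}. inj_on (\<Phi> h) (subfield q N') \<and> fq_linear_on q (subfield q N') (\<Phi> h)
                 \<and> \<Phi> h ` subfield q N' \<subseteq> subfield q M"
    and dist: "\<forall>h\<in>{1..S}. \<forall>h'\<in>{1..S}. h \<noteq> h' \<longrightarrow>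
                 orb q M (\<Phi> h ` subfield q N') \<noteq> orb q M (\<Phi> h' ` subfield q N')"
    and full: "\<forall>h\<in>{1..S}. full_length q M (\<Phi> h ` subfield q N')"
    and Cc: "Cc = (\<Union>h\<in>{1..S}. orb q M (\<Phi> h ` subfield q N'))"
    and D: "D = {(\<lambda>x. \<beta> * x) ` (\<Phi> h ` U) | \<beta> h U.
                 \<beta> \<in> subfield q M \<and> \<beta> \<noteq> 0 \<and> h \<in> {1..S} \<and> U \<in> D'}"
    and md: "min_dist q Cc = enat (2 * N' - 2)"
    and N': "N' \<ge> 1"
    and IH1: "D' \<subseteq> Grass q N' k"
    and IH2: "\<forall>X\<in>D'. \<forall>Y\<in>D'. X \<noteq> Y \<longrightarrow> 2*k-2 \<le> sdist q X Y"
    and IH3: "\<exists>X\<in>D'. \<exists>Y\<in>D'. X \<noteq> Y \<and> sdist q X Y = 2*k-2"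
  shows "D \<subseteq> Grass q M k \<and> (\<forall>X\<in>D. \<forall>Y\<in>D. X \<noteq> Y \<longrightarrow> 2*k-2 \<le> sdist q X Y)
         \<and> (\<exists>X\<in>D. \<exists>Y\<in>D. X \<noteq> Y \<and> sdist q X Y = 2*k-2) \<and> card D = card Cc * card D'"
proof -
  let ?F = "subfield q 1 :: 'a set"
  let ?SN = "subfield q N' :: 'a set"
  define V where "V h = \<Phi> h ` ?SN" for h
  define G where "G \<beta> h = (\<lambda>x. \<beta> * \<Phi> h x)" for \<beta> :: 'a and h
  have SNsub: "fq_subspace ?F ?SN" by (rule subfield_subspace[OF s])
  have lin: "fq_linear_on q ?SN (\<Phi> h)" "inj_on (\<Phi> h) ?SN" "\<Phi> h ` ?SN \<subseteq> subfield q M"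
    if "h \<in> {1..S}" for h using Phi that by auto
  have Glin: "fq_linear_on q ?SN (G \<beta> h)" if "h \<in> {1..S}" for \<beta> h
    unfolding G_def by (rule lin_scale[OF lin(1)[OF that]])
  have Ginj: "inj_on (G \<beta> h) ?SN" if "h \<in> {1..S}" "\<beta> \<noteq> 0" for \<beta> h
    unfolding G_def by (rule inj_scale[OF lin(2)[OF that(1)] that(2)])
  have img: "(\<lambda>x. \<beta> * x) ` (\<Phi> h ` U) = G \<beta> h ` U" for \<beta> h U
    unfolding G_def by (simp add: image_image)
  have Vsub: "fq_subspace ?F (V h)" if "h \<in> {1..S}" for h
    unfolding V_def by (rule lin_image_subspace[OF lin(1)[OF that] _ SNsub]) simp
  define dS where "dS = fq_dim ?F ?SN"
  have dS_le: "dS \<le> N'"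
  proof -
    have c1: "card ?SN = q ^ dS" using card_sp[OF s SNsub] unfolding dS_def .
    have c2: "card ?SN \<le> q ^ N'" using card_sub_le[where 'a='a] ffs_q2[OF s] N' by blast
    have "q ^ dS \<le> q ^ N'" using c1 c2 by simp
    then show ?thesis using ffs_q2[OF s] by simp
  qed
  have Dp: "U \<subseteq> ?SN" "fq_subspace ?F U" "fq_dim ?F U = k" if "U \<in> D'" for U
    using IH1 that unfolding Grass_def by auto
  have Wsub: "fq_subspace ?F ((\<lambda>x. \<beta> * x) ` V h)" "fq_dim ?F ((\<lambda>x. \<beta> * x) ` V h) = dS"
    if "h \<in> {1..S}" "\<beta> \<noteq> 0" for \<beta> h
  proof -
    have e: "(\<lambda>x. \<beta> * x) ` V h = G \<beta> h ` ?SN" unfolding V_def img ..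
    show "fq_subspace ?F ((\<lambda>x. \<beta> * x) ` V h)" unfolding e
      by (rule lin_image_subspace[OF Glin[OF that(1)] _ SNsub]) simp
    show "fq_dim ?F ((\<lambda>x. \<beta> * x) ` V h) = dS" unfolding e dS_def
      by (rule dim_image[OF s Glin[OF that(1)] Ginj[OF that] _ SNsub]) simp
  qed
  have CcE: "\<exists>\<beta> h. \<beta> \<in> subfield q M \<and> \<beta> \<noteq> 0 \<and> h \<in> {1..S} \<and> W = (\<lambda>x. \<beta> * x) ` V h"
    if "W \<in> Cc" for W using that unfolding Cc orb_def V_def by blast
  have CcI: "(\<lambda>x. \<beta> * x) ` V h \<in> Cc" if "\<beta> \<in> subfield q M" "\<beta> \<noteq> 0" "h \<in> {1..S}" for \<beta> h
    using that unfolding Cc orb_def V_def by blast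
  have K1: "fq_dim ?F (W \<inter> W') \<le> 1" if WC: "W \<in> Cc" "W' \<in> Cc" "W \<noteq> W'" for W W'
  proof -
    obtain \<beta> h where b: "\<beta> \<in> subfield q M" "\<beta> \<noteq> 0" "h \<in> {1..S}" "W = (\<lambda>x. \<beta> * x) ` V h"
      using CcE[OF WC(1)] by blast
    obtain \<beta>' h' where b': "\<beta>' \<in> subfield q M" "\<beta>' \<noteq> 0" "h' \<in> {1..S}" "W' = (\<lambda>x. \<beta>' * x) ` V h'"
      using CcE[OF WC(2)] by blast
    have f: "sdist q W W' = 2 * dS - 2 * fq_dim ?F (W \<inter> W') \<and> fq_dim ?F (W \<inter> W') \<le> dS"
      unfolding b(4) b'(4)
      by (rule sdist_formula[OF s Wsub(1)[OF b(3,2)] Wsub(1)[OF b'(3,2)] Wsub(2)[OF b(3,2)] Wsub(2)[OF b'(3,2)]])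
    have "2 * N' - 2 \<le> sdist q W W'" by (rule min_dist_le[OF md WC])
    then show ?thesis using f dS_le by linarith
  qed
  have K2: "h = h' \<and> inverse \<beta>' * \<beta> \<in> ?F \<and> inverse \<beta>' * \<beta> \<noteq> 0"
    if "\<beta> \<in> subfield q M" "\<beta> \<noteq> 0" "h \<in> {1..S}" "\<beta>' \<in> subfield q M" "\<beta>' \<noteq> 0" "h' \<in> {1..S}"
       "(\<lambda>x. \<beta> * x) ` V h = (\<lambda>x. \<beta>' * x) ` V h'" for \<beta> h \<beta>' h'
  proof -
    have "orb q M (V h) \<subseteq> orb q M (V h')" by (rule orb_sub[OF that(1,2,4,5,7)])
    moreover have "orb q M (V h') \<subseteq> orb q M (V h)" by (rule orb_sub[OF that(4,5,1,2) that(7)[symmetric]])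
    ultimately have "orb q M (V h) = orb q M (V h')" by blast
    then have hh: "h = h'" using dist that(3,6) unfolding V_def by blast
    have st: "(\<lambda>x. (inverse \<beta>' * \<beta>) * x) ` V h = V h"
      by (rule stab) (use that hh in auto)
    have "inverse \<beta>' * \<beta> \<in> subfield q M" using that by (simp add: sub_mult sub_inverse)
    moreover have "inverse \<beta>' * \<beta> \<noteq> 0" using that by simp
    ultimately have "inverse \<beta>' * \<beta> \<in> ?F - {0}"
      using full that(3) st unfolding full_length_def V_def by blast
    then show ?thesis using hh by blast
  qed
  have K2': "(\<lambda>x. \<beta> * x) ` (\<Phi> h ` U) = (\<lambda>x. \<beta>' * x) ` (\<Phi> h ` U)"
    if "\<beta> \<in> subfield q M" "\<beta> \<noteq> 0" "h \<in> {1..S}" "\<beta>' \<in> subfield q M" "\<beta>' \<noteq> 0" "h' \<in> {1..S}"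
       "(\<lambda>x. \<beta> * x) ` V h = (\<lambda>x. \<beta>' * x) ` V h'" "U \<in> D'" for \<beta> h \<beta>' h' U
  proof -
    define \<gamma> where "\<gamma> = inverse \<beta>' * \<beta>"
    have g: "\<gamma> \<in> ?F" "\<gamma> \<noteq> 0" using K2[OF that(1-7)] unfolding \<gamma>_def by auto
    have PU: "fq_subspace ?F (\<Phi> h ` U)"
      by (rule lin_image_subspace[OF lin(1)[OF that(3)] Dp(1,2)[OF that(8)]])
    have "\<beta> = \<beta>' * \<gamma>" unfolding \<gamma>_def using that(5) by simp
    then have "(\<lambda>x. \<beta> * x) ` (\<Phi> h ` U) = (\<lambda>x. \<beta>' * x) ` ((\<lambda>x. \<gamma> * x) ` (\<Phi> h ` U))"
      by (simp add: scale_scale)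
    also have "(\<lambda>x. \<gamma> * x) ` (\<Phi> h ` U) = \<Phi> h ` U" by (rule scale_subspace_eq[OF g PU])
    finally show ?thesis .
  qed
  have XinGrass: "G \<beta> h ` U \<in> Grass q M k"
    if "\<beta> \<in> subfield q M" "\<beta> \<noteq> 0" "h \<in> {1..S}" "U \<in> D'" for \<beta> h U
  proof -
    have "G \<beta> h ` U \<subseteq> subfield q M"
      using lin(3)[OF that(3)] Dp(1)[OF that(4)] that(1) unfolding G_def by (auto intro!: sub_mult)
    moreover have "fq_subspace ?F (G \<beta> h ` U)"
      by (rule lin_image_subspace[OF Glin[OF that(3)] Dp(1,2)[OF that(4)]])
    moreover have "fq_dim ?F (G \<beta> h ` U) = k"
      using dim_image[OF s Glin[OF that(3)] Ginj[OF that(3,2)] Dp(1,2)[OF that(4)]] Dp(3)[OF that(4)] by simp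
    ultimately show ?thesis unfolding Grass_def by blast
  qed
  have XsubW: "G \<beta> h ` U \<subseteq> (\<lambda>x. \<beta> * x) ` V h" if "U \<in> D'" for \<beta> h U
    using Dp(1)[OF that] unfolding V_def img[symmetric] by blast
  have A: "D \<subseteq> Grass q M k"
  proof
    fix X assume "X \<in> D"
    then obtain \<beta> h U where "\<beta> \<in> subfield q M" "\<beta> \<noteq> 0" "h \<in> {1..S}" "U \<in> D'"
      "X = G \<beta> h ` U" unfolding D img by blast
    then show "X \<in> Grass q M k" using XinGrass by blast
  qed
  have Gr: "X \<subseteq> subfield q M" "fq_subspace ?F X" "fq_dim ?F X = k" if "X \<in> D" for X
    using A that unfolding Grass_def by auto
  have B: "\<forall>X\<in>D. \<forall>Y\<in>D. X \<noteq> Y \<longrightarrow> 2*k-2 \<le> sdist q X Y"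
  proof (intro ballI impI)
    fix X Y assume X: "X \<in> D" and Y: "Y \<in> D" and XY: "X \<noteq> Y"
    obtain \<beta> h U where b: "\<beta> \<in> subfield q M" "\<beta> \<noteq> 0" "h \<in> {1..S}" "U \<in> D'"
      "X = (\<lambda>x. \<beta> * x) ` (\<Phi> h ` U)" using X unfolding D by blast
    obtain \<beta>' h' U' where b': "\<beta>' \<in> subfield q M" "\<beta>' \<noteq> 0" "h' \<in> {1..S}" "U' \<in> D'"
      "Y = (\<lambda>x. \<beta>' * x) ` (\<Phi> h' ` U')" using Y unfolding D by blast
    show "2*k-2 \<le> sdist q X Y"
    proof (cases "(\<lambda>x. \<beta> * x) ` V h = (\<lambda>x. \<beta>' * x) ` V h'")
      case False
      have W: "(\<lambda>x. \<beta> * x) ` V h \<in> Cc" "(\<lambda>x. \<beta>' * x) ` V h' \<in> Cc"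
        using CcI b b' by auto
      have sub: "X \<inter> Y \<subseteq> (\<lambda>x. \<beta> * x) ` V h \<inter> (\<lambda>x. \<beta>' * x) ` V h'"
        using XsubW[OF b(4), of \<beta> h] XsubW[OF b'(4), of \<beta>' h'] unfolding b(5) b'(5) img by blast
      have "fq_dim ?F (X \<inter> Y) \<le> fq_dim ?F ((\<lambda>x. \<beta> * x) ` V h \<inter> (\<lambda>x. \<beta>' * x) ` V h')"
        by (rule dim_mono[OF s subspace_int[OF Gr(2)[OF X] Gr(2)[OF Y]]
              subspace_int[OF Wsub(1)[OF b(3,2)] Wsub(1)[OF b'(3,2)]] sub])
      also have "\<dots> \<le> 1" by (rule K1[OF W False])
      finally have "fq_dim ?F (X \<inter> Y) \<le> 1" .
      moreover have "sdist q X Y = 2 * k - 2 * fq_dim ?F (X \<inter> Y)"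
        using sdist_formula[OF s Gr(2)[OF X] Gr(2)[OF Y] Gr(3)[OF X] Gr(3)[OF Y]] by blast
      ultimately show ?thesis by linarith
    next
      case True
      have hh: "h = h'" using K2[OF b(1-3) b'(1-3) True] by blast
      have "X = (\<lambda>x. \<beta>' * x) ` (\<Phi> h ` U)"
        unfolding b(5) by (rule K2'[OF b(1-3) b'(1-3) True b(4)])
      then have X': "X = G \<beta>' h ` U" by (simp add: img)
      have Y': "Y = G \<beta>' h ` U'" unfolding b'(5) hh img ..
      have "U \<noteq> U'" using XY X' Y' by blast
      then have "2*k-2 \<le> sdist q U U'" using IH2 b(4) b'(4) by blast
      also have "sdist q U U' = sdist q X Y" unfolding X' Y'
        by (rule sdist_image[OF s Glin[OF b(3)] Ginj[OF b(3) b'(2)] SNsub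
              Dp(1)[OF b(4)] Dp(1)[OF b'(4)] Dp(2)[OF b(4)] Dp(2)[OF b'(4)], symmetric])
      finally show ?thesis .
    qed
  qed
  have S1: "1 \<in> {1..S}"
  proof (rule ccontr)
    assume "1 \<notin> {1..S}"
    then have "Cc = {}" unfolding Cc by auto
    then have "min_dist q Cc = \<infinity>" unfolding min_dist_def by (simp add: Inf_enat_def)
    then show False using md by simp
  qed
  have C: "\<exists>X\<in>D. \<exists>Y\<in>D. X \<noteq> Y \<and> sdist q X Y = 2*k-2"
  proof -
    obtain U U' where u: "U \<in> D'" "U' \<in> D'" "U \<noteq> U'" "sdist q U U' = 2*k-2" using IH3 by blast
    have inD: "G 1 1 ` Z \<in> D" if Z: "Z \<in> D'" for Z
    proof -
      have "(\<lambda>x. 1 * x) ` (\<Phi> 1 ` Z) \<in> D" unfolding D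
        apply (rule CollectI)
        apply (rule exI[of _ "1::'a"])
        apply (rule exI[of _ "1::nat"])
        apply (rule exI[of _ Z])
        using Z S1 sub_one[of q M] by simp
      then show ?thesis by (simp only: img)
    qed
    have n1: "G 1 1 ` U \<noteq> G 1 1 ` U'"
      using u(3) inj_on_image_eq_iff[OF Ginj[OF S1, of 1] Dp(1)[OF u(1)] Dp(1)[OF u(2)]] by simp
    have n2: "sdist q (G 1 1 ` U) (G 1 1 ` U') = 2*k-2"
      using sdist_image[OF s Glin[OF S1] Ginj[OF S1, of 1] SNsub
              Dp(1)[OF u(1)] Dp(1)[OF u(2)] Dp(2)[OF u(1)] Dp(2)[OF u(2)]] u(4) by simp
    show ?thesis
      apply (rule bexI[OF _ inD[OF u(1)]])
      apply (rule bexI[OF _ inD[OF u(2)]])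
      using n1 n2 by (rule conjI)
  qed
  define rep where "rep W = (SOME p. fst p \<in> subfield q M \<and> fst p \<noteq> 0 \<and> snd p \<in> {1..S}
                          \<and> W = (\<lambda>x. fst p * x) ` V (snd p))" for W
  have rep: "fst (rep W) \<in> subfield q M \<and> fst (rep W) \<noteq> 0 \<and> snd (rep W) \<in> {1..S}
             \<and> W = (\<lambda>x. fst (rep W) * x) ` V (snd (rep W))" if WC: "W \<in> Cc" for W
  proof -
    obtain \<beta> h where "\<beta> \<in> subfield q M \<and> \<beta> \<noteq> 0 \<and> h \<in> {1..S} \<and> W = (\<lambda>x. \<beta> * x) ` V h"
      using CcE[OF WC] by blast
    then have "\<exists>p. fst p \<in> subfield q M \<and> fst p \<noteq> 0 \<and> snd p \<in> {1..S}
                          \<and> W = (\<lambda>x. fst p * x) ` V (snd p)" by (intro exI[of _ "(\<beta>, h)"]) simp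
    then show ?thesis unfolding rep_def by (rule someI_ex)
  qed
  define \<psi> where "\<psi> p = G (fst (rep (fst p))) (snd (rep (fst p))) ` (snd p)" for p
  have bij: "bij_betw \<psi> (Cc \<times> D') D"
    unfolding bij_betw_def
  proof (intro conjI)
    show "inj_on \<psi> (Cc \<times> D')"
    proof
      fix p p' assume p: "p \<in> Cc \<times> D'" and p': "p' \<in> Cc \<times> D'" and eq: "\<psi> p = \<psi> p'"
      obtain W U where pw: "p = (W, U)" "W \<in> Cc" "U \<in> D'" using p by auto
      obtain W' U' where pw': "p' = (W', U')" "W' \<in> Cc" "U' \<in> D'" using p' by auto
      note r = rep[OF pw(2)] and r' = rep[OF pw'(2)]
      have XinD: "\<psi> p \<in> D" unfolding \<psi>_def D img[symmetric] using r pw by auto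
      have "W = W'"
      proof (rule ccontr)
        assume ne: "W \<noteq> W'"
        have e: "(\<lambda>x. fst (rep W) * x) ` V (snd (rep W)) = W" using r by metis
        have e': "(\<lambda>x. fst (rep W') * x) ` V (snd (rep W')) = W'" using r' by metis
        have s1: "\<psi> p \<subseteq> W" unfolding \<psi>_def pw(1) fst_conv snd_conv
          using XsubW[OF pw(3)] e by (rule ord_le_eq_trans)
        have s2': "\<psi> p' \<subseteq> W'" unfolding \<psi>_def pw'(1) fst_conv snd_conv
          using XsubW[OF pw'(3)] e' by (rule ord_le_eq_trans)
        then have s2: "\<psi> p \<subseteq> W'" using eq by simp
        have "k \<le> fq_dim ?F (W \<inter> W')"
          using dim_mono[OF s Gr(2)[OF XinD] subspace_int[OF Wsub(1) Wsub(1)], of "snd (rep W)" "fst (rep W)" "snd (rep W')" "fst (rep W')"]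
            r r' s1 s2 Gr(3)[OF XinD] by force
        then show False using K1[OF pw(2) pw'(2) ne] k by simp
      qed
      then have "G (fst (rep W)) (snd (rep W)) ` U = G (fst (rep W)) (snd (rep W)) ` U'"
        using eq unfolding \<psi>_def pw(1) pw'(1) by simp
      then have "U = U'"
        using inj_on_image_eq_iff[OF Ginj Dp(1)[OF pw(3)] Dp(1)[OF pw'(3)]] r by blast
      then show "p = p'" using pw pw' \<open>W = W'\<close> by simp
    qed
  next
    show "\<psi> ` (Cc \<times> D') = D"
    proof
      show "\<psi> ` (Cc \<times> D') \<subseteq> D"
      proof
        fix X assume "X \<in> \<psi> ` (Cc \<times> D')"
        then obtain W U where "W \<in> Cc" "U \<in> D'" "X = \<psi> (W, U)" by auto
        then show "X \<in> D" unfolding \<psi>_def D img[symmetric] using rep by fastforce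
      qed
    next
      show "D \<subseteq> \<psi> ` (Cc \<times> D')"
      proof
        fix X assume "X \<in> D"
        then obtain \<beta> h U where b: "\<beta> \<in> subfield q M" "\<beta> \<noteq> 0" "h \<in> {1..S}" "U \<in> D'"
          "X = (\<lambda>x. \<beta> * x) ` (\<Phi> h ` U)" unfolding D by blast
        define W where "W = (\<lambda>x. \<beta> * x) ` V h"
        have W: "W \<in> Cc" unfolding W_def using CcI b by blast
        note r = rep[OF W]
        have eqW: "(\<lambda>x. \<beta> * x) ` V h = (\<lambda>x. fst (rep W) * x) ` V (snd (rep W))"
          using r unfolding W_def by simp
        have hh: "h = snd (rep W)" using K2[OF b(1-3) _ _ _ eqW] r by blast
        have "X = (\<lambda>x. fst (rep W) * x) ` (\<Phi> h ` U)"
          unfolding b(5) using K2'[OF b(1-3) _ _ _ eqW b(4)] r by blast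
        also have "\<dots> = \<psi> (W, U)" unfolding \<psi>_def img hh by simp
        finally show "X \<in> \<psi> ` (Cc \<times> D')" using W b(4) by blast
      qed
    qed
  qed
  have "card D = card (Cc \<times> D')" using bij_betw_same_card[OF bij] by simp
  then have Dcard: "card D = card Cc * card D'" by (simp add: card_cartesian_product)
  show ?thesis using A B C Dcard by blast
qed


lemma ffs_from:
  assumes q_pp: "\<exists>p a. prime p \<and> a > 0 \<and> q = p ^ a"
    and card_field: "card (UNIV :: 'a::{field,finite} set) = q ^ n"
    and n: "n > 0"
  shows "ffcond q n TYPE('a)"
proof -
  obtain p a where pa: "prime p" "a > 0" "q = p ^ a" using q_pp by blast
  have c0: "CHAR('a) > 0" by (rule finite_imp_CHAR_pos) simp
  have cp: "prime CHAR('a)" by (rule prime_CHAR_semidom[OF c0])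
  have "CHAR('a) dvd card (UNIV :: 'a set)" by (rule CHAR_dvd_CARD)
  then have "CHAR('a) dvd p ^ (a * n)" using card_field pa(3) by (simp add: power_mult)
  then have "CHAR('a) dvd p" using prime_dvd_power[OF cp] by blast
  then have "CHAR('a) = p" using primes_dvd_imp_eq[OF cp pa(1)] by blast
  then show ?thesis unfolding ffcond_def using cp pa card_field n by blast
qed

theorem theorem2p19:
  fixes q m k e n :: nat and r N s :: "nat \<Rightarrow> nat"
    and C1 :: "('a::{field,finite}) set set"
    and \<Phi> :: "nat \<Rightarrow> nat \<Rightarrow> 'a \<Rightarrow> 'a"
    and Cc D :: "nat \<Rightarrow> 'a set set"
  assumes q_pp: "\<exists>p a. prime p \<and> a > 0 \<and> q = p ^ a"
    and card_field: "card (UNIV :: 'a set) = q ^ n"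
    and e2: "e \<ge> 2"
    and r_gt: "\<forall>i\<in>{1..e-1}. r i > 1"
    and m_gt: "m > 1"
    and n_def: "n = (\<Prod>i\<in>{1..e-1}. r i) * m"
    and k_bds: "1 < k" "k \<le> m"
    and N1: "N 1 = m"
    and Ni: "\<forall>i\<in>{2..e}. N i = (\<Prod>j\<in>{1..i-1}. r j) * m"
    and C1_code: "cyclic_code q m k C1"
    and Phi_lin: "\<forall>i\<in>{2..e}. \<forall>h\<in>{1..s i}.
         inj_on (\<Phi> i h) (subfield q (N (i-1)))
       \<and> fq_linear_on q (subfield q (N (i-1))) (\<Phi> i h)
       \<and> \<Phi> i h ` subfield q (N (i-1)) \<subseteq> subfield q (N i)"
    and Phi_distinct: "\<forall>i\<in>{2..e}. \<forall>h\<in>{1..s i}. \<forall>h'\<in>{1..s i}. h \<noteq> h' \<longrightarrow>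
         orb q (N i) (\<Phi> i h ` subfield q (N (i-1))) \<noteq> orb q (N i) (\<Phi> i h' ` subfield q (N (i-1)))"
    and Phi_full: "\<forall>i\<in>{2..e}. \<forall>h\<in>{1..s i}. full_length q (N i) (\<Phi> i h ` subfield q (N (i-1)))"
    and Cc1: "Cc 1 = C1"
    and Cci: "\<forall>i\<in>{2..e}. Cc i = (\<Union>h\<in>{1..s i}. orb q (N i) (\<Phi> i h ` subfield q (N (i-1))))"
    and D1: "D 1 = C1"
    and Di: "\<forall>i\<in>{2..e}. D i = {(\<lambda>x. \<beta> * x) ` (\<Phi> i h ` U) | \<beta> h U.
                 \<beta> \<in> subfield q (N i) \<and> \<beta> \<noteq> 0 \<and> h \<in> {1..s i} \<and> U \<in> D (i-1)}"
    and d1: "min_dist q C1 = enat (2*k - 2)"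
    and di: "\<forall>i\<in>{2..e}. min_dist q (Cc i) = enat (2 * N (i-1) - 2)"
  shows "cyclic_code q n k (D e) \<and> min_dist q (D e) = enat (2*k - 2)
         \<and> card (D e) = (\<Prod>i\<in>{1..e}. card (Cc i))"
proof -
  have prodpos: "(\<Prod>j\<in>{1..i}. r j) > 0" if "i \<le> e - 1" for i
  proof (intro prod_pos)
    fix a assume "a \<in> {1..i}"
    then have "a \<in> {1..e-1}" using that by auto
    then have "r a > 1" using r_gt by blast
    then show "0 < r a" by simp
  qed
  have n0: "n > 0" unfolding n_def using prodpos[of "e - 1"] m_gt by simp
  have s: "ffcond q n TYPE('a)" by (rule ffs_from[OF q_pp card_field n0])
  have Nge: "N j \<ge> 1" if "j \<in> {1..e}" for j
  proof (cases "j = 1")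
    case True then show ?thesis using N1 m_gt by simp
  next
    case False
    then have "j \<in> {2..e}" using that by auto
    then have Nj: "N j = (\<Prod>j\<in>{1..j-1}. r j) * m" using Ni by blast
    have "j - 1 \<le> e - 1" using that by auto
    then have pp: "(\<Prod>j\<in>{1..j-1}. r j) > 0" by (rule prodpos)
    have "0 < m" using m_gt by simp
    have "0 < (\<Prod>j\<in>{1..j-1}. r j) * m" by (rule mult_pos_pos[OF pp \<open>0 < m\<close>])
    then show ?thesis unfolding Nj by linarith
  qed
  have Ne: "N e = n" using Ni e2 n_def by auto
  define P where "P i \<longleftrightarrow> D i \<subseteq> Grass q (N i) k
      \<and> (\<forall>X\<in>D i. \<forall>Y\<in>D i. X \<noteq> Y \<longrightarrow> 2*k-2 \<le> sdist q X Y)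
      \<and> (\<exists>X\<in>D i. \<exists>Y\<in>D i. X \<noteq> Y \<and> sdist q X Y = 2*k-2)
      \<and> card (D i) = (\<Prod>j\<in>{1..i}. card (Cc j))" for i
  have P1: "P 1"
  proof -
    have "D 1 \<subseteq> Grass q (N 1) k" using C1_code D1 N1 unfolding cyclic_code_def by simp
    moreover have "\<forall>X\<in>D 1. \<forall>Y\<in>D 1. X \<noteq> Y \<longrightarrow> 2*k-2 \<le> sdist q X Y"
      using min_dist_le[OF d1] D1 by blast
    moreover have "\<exists>X\<in>D 1. \<exists>Y\<in>D 1. X \<noteq> Y \<and> sdist q X Y = 2*k-2"
      using min_dist_ne[OF d1] D1 by simp
    moreover have "card (D 1) = (\<Prod>j\<in>{1..1}. card (Cc j))" using D1 Cc1 by simp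
    ultimately show ?thesis unfolding P_def by blast
  qed
  have Pstep: "P (Suc i)" if i1: "1 \<le> i" and ie: "Suc i \<le> e" and Pi: "P i" for i
  proof -
    have si: "Suc i \<in> {2..e}" using i1 ie by auto
    have Phi': "\<forall>h\<in>{1..s (Suc i)}. inj_on (\<Phi> (Suc i) h) (subfield q (N i))
       \<and> fq_linear_on q (subfield q (N i)) (\<Phi> (Suc i) h)
       \<and> \<Phi> (Suc i) h ` subfield q (N i) \<subseteq> subfield q (N (Suc i))"
      using bspec[OF Phi_lin si] by simp
    have dist': "\<forall>h\<in>{1..s (Suc i)}. \<forall>h'\<in>{1..s (Suc i)}. h \<noteq> h' \<longrightarrow>
         orb q (N (Suc i)) (\<Phi> (Suc i) h ` subfield q (N i)) \<noteq> orb q (N (Suc i)) (\<Phi> (Suc i) h' ` subfield q (N i))"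
      using bspec[OF Phi_distinct si] by simp
    have full': "\<forall>h\<in>{1..s (Suc i)}. full_length q (N (Suc i)) (\<Phi> (Suc i) h ` subfield q (N i))"
      using bspec[OF Phi_full si] by simp
    have Cc': "Cc (Suc i) = (\<Union>h\<in>{1..s (Suc i)}. orb q (N (Suc i)) (\<Phi> (Suc i) h ` subfield q (N i)))"
      using bspec[OF Cci si] by simp
    have D': "D (Suc i) = {(\<lambda>x. \<beta> * x) ` (\<Phi> (Suc i) h ` U) | \<beta> h U.
                 \<beta> \<in> subfield q (N (Suc i)) \<and> \<beta> \<noteq> 0 \<and> h \<in> {1..s (Suc i)} \<and> U \<in> D i}"
      using bspec[OF Di si] by simp
    have md': "min_dist q (Cc (Suc i)) = enat (2 * N i - 2)"
      using bspec[OF di si] by simp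
    have N': "N i \<ge> 1" using Nge[of i] i1 ie by simp
    from Pi have IH: "D i \<subseteq> Grass q (N i) k"
      "\<forall>X\<in>D i. \<forall>Y\<in>D i. X \<noteq> Y \<longrightarrow> 2*k-2 \<le> sdist q X Y"
      "\<exists>X\<in>D i. \<exists>Y\<in>D i. X \<noteq> Y \<and> sdist q X Y = 2*k-2"
      "card (D i) = (\<Prod>j\<in>{1..i}. card (Cc j))" unfolding P_def by blast+
    note st = step[OF s k_bds(1) Phi' dist' full' Cc' D' md' N' IH(1-3)]
    have "(\<Prod>j\<in>{1..Suc i}. card (Cc j)) = card (Cc (Suc i)) * (\<Prod>j\<in>{1..i}. card (Cc j))"
      by (simp add: prod.cl_ivl_Suc mult.commute)
    then show ?thesis unfolding P_def using st IH(4) by simp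
  qed
  have Pall: "P i" if "1 \<le> i" "i \<le> e" for i
    using that
  proof (induction i)
    case 0 then show ?case by simp
  next
    case (Suc i)
    show ?case
    proof (cases "i = 0")
      case True then show ?thesis using P1 by simp
    next
      case False
      then have "P i" using Suc by simp
      then show ?thesis using Pstep[of i] False Suc.prems by simp
    qed
  qed
  have Pe: "P e" using Pall[of e] e2 by simp
  then have E: "D e \<subseteq> Grass q n k"
      "\<forall>X\<in>D e. \<forall>Y\<in>D e. X \<noteq> Y \<longrightarrow> 2*k-2 \<le> sdist q X Y"
      "\<exists>X\<in>D e. \<exists>Y\<in>D e. X \<noteq> Y \<and> sdist q X Y = 2*k-2"
      "card (D e) = (\<Prod>j\<in>{1..e}. card (Cc j))" unfolding P_def Ne by blast+
  have md: "min_dist q (D e) = enat (2*k - 2)"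
  proof (rule antisym)
    obtain X Y where "X \<in> D e" "Y \<in> D e" "X \<noteq> Y" "sdist q X Y = 2*k-2" using E(3) by blast
    then show "min_dist q (D e) \<le> enat (2*k - 2)" unfolding min_dist_def
      by (intro Inf_lower) force
  next
    show "enat (2*k - 2) \<le> min_dist q (D e)" unfolding min_dist_def
    proof (rule Inf_greatest)
      fix x assume "x \<in> {enat (sdist q U V) | U V. U \<in> D e \<and> V \<in> D e \<and> U \<noteq> V}"
      then obtain U V where uv: "x = enat (sdist q U V)" "U \<in> D e" "V \<in> D e" "U \<noteq> V" by blast
      then have "2*k-2 \<le> sdist q U V" using E(2) by blast
      then show "enat (2*k - 2) \<le> x" using uv(1) by simp
    qed
  qed
  have cyc: "cyclic_code q n k (D e)"
    unfolding cyclic_code_def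
  proof (intro conjI exI[of _ "D e"])
    show "D e \<subseteq> Grass q n k" by (rule E(1))
    show "finite (D e)" by simp
    show "D e \<subseteq> Grass q n k" by (rule E(1))
    show "D e = \<Union> (orb q n ` D e)"
    proof
      show "D e \<subseteq> \<Union> (orb q n ` D e)"
      proof
        fix X assume X: "X \<in> D e"
        have "X = (\<lambda>x. 1 * x) ` X" by simp
        then have "X \<in> orb q n X" unfolding orb_def using sub_one by fastforce
        then show "X \<in> \<Union> (orb q n ` D e)" using X by blast
      qed
    next
      show "\<Union> (orb q n ` D e) \<subseteq> D e"
      proof
        fix Y assume "Y \<in> \<Union> (orb q n ` D e)"
        then obtain X \<gamma> where X: "X \<in> D e" "\<gamma> \<in> subfield q n" "\<gamma> \<noteq> 0" "Y = (\<lambda>x. \<gamma> * x) ` X"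
          unfolding orb_def by blast
        have ee: "e \<in> {2..e}" using e2 by simp
        have Dee: "D e = {(\<lambda>x. \<beta> * x) ` (\<Phi> e h ` U) | \<beta> h U.
                 \<beta> \<in> subfield q (N e) \<and> \<beta> \<noteq> 0 \<and> h \<in> {1..s e} \<and> U \<in> D (e-1)}"
          using bspec[OF Di ee] .
        obtain \<beta> h U where b: "\<beta> \<in> subfield q (N e)" "\<beta> \<noteq> 0" "h \<in> {1..s e}" "U \<in> D (e-1)"
          "X = (\<lambda>x. \<beta> * x) ` (\<Phi> e h ` U)" using X(1) unfolding Dee by blast
        have "Y = (\<lambda>x. (\<gamma> * \<beta>) * x) ` (\<Phi> e h ` U)" unfolding X(4) b(5) scale_scale ..
        moreover have "\<gamma> * \<beta> \<in> subfield q (N e)" using X(2) b(1) Ne by (simp add: sub_mult)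
        moreover have "\<gamma> * \<beta> \<noteq> 0" using X(3) b(2) by simp
        ultimately show "Y \<in> D e" unfolding Dee using b(3,4) by blast
      qed
    qed
  qed
  show ?thesis using cyc md E(4) by blast
qed

end
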